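(* Let $(m,n)$ be coprime positive integers, $\gamma\in D_{m,n}$, and $(r_h,r_v)\in O(\gamma)$, where $r_h$ is the horizontal step ending at $(a,b)$ and $r_v$ is the vertical step starting at $(a',b')$. Then: (1) $l(a-1,b)$ intersects $r_v$ if and only if $-n< n(a'-a)-m(b'-b)< m-n$; (2) $l(a',b'+1)$ intersects $r_h$ if and only if $m-n< n(a'-a)-m(b'-b)< m$. In particular the conditions in (1) and (2) cannot hold simultaneously. Moreover, $(r_h,r_v)\in H(\gamma)$ if and only if $l(a-1,b)$ intersects $r_v$ or $l(a',b'+1)$ intersects $r_h$.
   Context: An $(m,n)$-Dyck path is a lattice path from $(0,0)$ to $(m,n)$ of $m$ horizontal unit steps $(1,0)$ and $n$ vertical unit steps $(0,1)$ lying weakly above $y=(n/m)x$; $D_{m,n}$ is the set of them. For a point $p$, $l(p)$ denotes the line through $p$ parallel to $y=(n/m)x$ (a "parallel line"). Steps are regarded as closed unit segments. $O(\gamma)$ is the set of pairs $(r_h,r_v)$ with $r_h$ a horizontal step and $r_v$ a vertical step of $\gamma$, $r_v$ appearing after $r_h$ along $\gamma$; $H(\gamma)$ is the set of pairs in $O(\gamma)$ for which some parallel line intersects both $r_h$ and $r_v$. *)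

theory Defs
  imports "HOL-Analysis.Analysis"
begin

text \<open>A lattice path is a list of unit steps: H = (1,0), V = (0,1).\<close>
datatype step = H | V

definition pt :: "step list \<Rightarrow> nat \<Rightarrow> int \<times> int" where
  "pt \<gamma> k = (int (length (filter (\<lambda>s. s = H) (take k \<gamma>))),
              int (length (filter (\<lambda>s. s = V) (take k \<gamma>))))"

definition rpt :: "int \<times> int \<Rightarrow> real \<times> real" where
  "rpt p = (of_int (fst p), of_int (snd p))"

text \<open>(m,n)-Dyck paths: m horizontal and n vertical steps, every lattice point
  of the path weakly above y = (n/m) x (i.e. n x \<le> m y).\<close>
definition dyck_path :: "nat \<Rightarrow> nat \<Rightarrow> step list \<Rightarrow> bool" where
  "dyck_path m n \<gamma> \<longleftrightarrow>
     length (filter (\<lambda>s. s = H) \<gamma>) = m \<and> length (filter (\<lambda>s. s = V) \<gamma>) = n \<and>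
     (\<forall>k \<le> length \<gamma>. int n * fst (pt \<gamma> k) \<le> int m * snd (pt \<gamma> k))"

definition D :: "nat \<Rightarrow> nat \<Rightarrow> step list set" where
  "D m n = {\<gamma>. dyck_path m n \<gamma>}"

definition step_seg :: "step list \<Rightarrow> nat \<Rightarrow> (real \<times> real) set" where
  "step_seg \<gamma> i = closed_segment (rpt (pt \<gamma> i)) (rpt (pt \<gamma> (Suc i)))"

definition par_line :: "nat \<Rightarrow> nat \<Rightarrow> real \<times> real \<Rightarrow> (real \<times> real) set" where
  "par_line m n p = {q. real n * (fst q - fst p) = real m * (snd q - snd p)}"

definition O_set :: "step list \<Rightarrow> (nat \<times> nat) set" where
  "O_set \<gamma> = {(i, j). i < j \<and> j < length \<gamma> \<and> \<gamma> ! i = H \<and> \<gamma> ! j = V}"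

definition H_set :: "nat \<Rightarrow> nat \<Rightarrow> step list \<Rightarrow> (nat \<times> nat) set" where
  "H_set m n \<gamma> = {(i, j) \<in> O_set \<gamma>. \<exists>p. par_line m n p \<inter> step_seg \<gamma> i \<noteq> {} \<and>
                                           par_line m n p \<inter> step_seg \<gamma> j \<noteq> {}}"

end

theory Submission
  imports Defs
begin

lemma hit_le:
  fixes A B :: "real \<times> real" and \<alpha> \<beta> c :: real
  assumes le: "\<alpha> * fst A + \<beta> * snd A \<le> \<alpha> * fst B + \<beta> * snd B"
  shows "(\<exists>q\<in>closed_segment A B. \<alpha> * fst q + \<beta> * snd q = c) \<longleftrightarrow>
         \<alpha> * fst A + \<beta> * snd A \<le> c \<and> c \<le> \<alpha> * fst B + \<beta> * snd B"
proof -
  define gA where "gA = \<alpha> * fst A + \<beta> * snd A"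
  define gB where "gB = \<alpha> * fst B + \<beta> * snd B"
  have val: "\<alpha> * fst ((1 - u) *\<^sub>R A + u *\<^sub>R B) + \<beta> * snd ((1 - u) *\<^sub>R A + u *\<^sub>R B)
      = (1-u)*gA + u*gB" for u
    by (simp add: gA_def gB_def algebra_simps)
  show ?thesis unfolding gA_def[symmetric] gB_def[symmetric]
  proof
    assume "\<exists>q\<in>closed_segment A B. \<alpha> * fst q + \<beta> * snd q = c"
    then obtain q where q: "q \<in> closed_segment A B" " \<alpha> * fst q + \<beta> * snd q = c" by blast
    then obtain u where u: "0 \<le> u" "u \<le> 1" "q = (1 - u) *\<^sub>R A + u *\<^sub>R B"
      unfolding closed_segment_def by auto
    have u3: "c = (1-u)*gA + u*gB" using q(2) val[of u] u(3) by simp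
    have "gA \<le> gB" using le by (simp add: gA_def gB_def)
    hence "u*gA \<le> u*gB" "(1-u)*gA \<le> (1-u)*gB" using u by (auto intro: mult_left_mono)
    thus "gA \<le> c \<and> c \<le> gB"
      using u u3 by (auto simp: algebra_simps)
  next
    assume c: "gA \<le> c \<and> c \<le> gB"
    show "\<exists>q\<in>closed_segment A B. \<alpha> * fst q + \<beta> * snd q = c"
    proof (cases "gA = gB")
      case True
      hence "c = gA" using c by auto
      thus ?thesis by (intro bexI[of _ A]) (auto simp: gA_def)
    next
      case False
      hence lt: "gA < gB" using le gA_def gB_def by auto
      define u where "u = (c - gA)/(gB - gA)"
      have u: "0 \<le> u" "u \<le> 1" using c lt by (auto simp: u_def field_simps)
      have "(1-u)*gA + u*gB = gA + u*(gB - gA)" by (simp add: algebra_simps)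
      also have "u*(gB-gA) = c - gA" using lt by (simp add: u_def)
      finally have "(1-u)*gA + u*gB = c" by simp
      thus ?thesis using u val unfolding closed_segment_def by (intro bexI[of _ "(1 - u) *\<^sub>R A + u *\<^sub>R B"]) auto
    qed
  qed
qed

lemma par_hit:
  "par_line m n p \<inter> S \<noteq> {} \<longleftrightarrow>
   (\<exists>q\<in>S. real n * fst q + (- real m) * snd q = real n * fst p - real m * snd p)"
  unfolding par_line_def by (auto simp: algebra_simps)

lemma pt_Suc:
  assumes "k < length \<gamma>"
  shows "pt \<gamma> (Suc k) = (if \<gamma>!k = H then (fst (pt \<gamma> k) + 1, snd (pt \<gamma> k))
                                    else (fst (pt \<gamma> k), snd (pt \<gamma> k) + 1))"
  using assms by (cases "\<gamma>!k") (auto simp: pt_def take_Suc_conv_app_nth)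

lemma pt_mono:
  assumes "k \<le> l"
  shows "fst (pt \<gamma> k) \<le> fst (pt \<gamma> l) \<and> snd (pt \<gamma> k) \<le> snd (pt \<gamma> l)"
proof -
  have "take l \<gamma> = take k \<gamma> @ drop k (take l \<gamma>)"
    using assms by (metis append_take_drop_id min.absorb1 take_take)
  then show ?thesis unfolding pt_def
    by (metis (no_types, lifting) filter_append fst_conv le_add1 length_append of_nat_le_iff snd_conv)
qed

lemma segH:
  assumes "k < length \<gamma>" "\<gamma>!k = H" "pt \<gamma> (Suc k) = (x, y)"
  shows "par_line m n p \<inter> step_seg \<gamma> k \<noteq> {} \<longleftrightarrow>
    real_of_int (int n*(x-1) - int m*y) \<le> real n * fst p - real m * snd p \<and>
    real n * fst p - real m * snd p \<le> real_of_int (int n * x - int m*y)"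
proof -
  have p0: "pt \<gamma> k = (x-1, y)" using pt_Suc[OF assms(1)] assms(2,3) by auto
  have "par_line m n p \<inter> step_seg \<gamma> k \<noteq> {} \<longleftrightarrow>
    (\<exists>q\<in>closed_segment (rpt (x-1,y)) (rpt (x,y)). real n * fst q + (- real m) * snd q = real n * fst p - real m * snd p)"
    unfolding par_hit step_seg_def p0 assms(3) ..
  also have "\<dots> \<longleftrightarrow> real n * fst (rpt (x-1,y)) + (- real m) * snd (rpt (x-1,y)) \<le> real n * fst p - real m * snd p
     \<and> real n * fst p - real m * snd p \<le> real n * fst (rpt (x,y)) + (- real m) * snd (rpt (x,y))"
    by (rule hit_le) (simp add: rpt_def algebra_simps)
  finally show ?thesis by (simp add: rpt_def algebra_simps)
qed

lemma segV:
  assumes "k < length \<gamma>" "\<gamma>!k = V" "pt \<gamma> k = (x, y)"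
  shows "par_line m n p \<inter> step_seg \<gamma> k \<noteq> {} \<longleftrightarrow>
    real_of_int (int n*x - int m*(y+1)) \<le> real n * fst p - real m * snd p \<and>
    real n * fst p - real m * snd p \<le> real_of_int (int n * x - int m*y)"
proof -
  have p0: "pt \<gamma> (Suc k) = (x, y+1)" using pt_Suc[OF assms(1)] assms(2,3) by auto
  have "par_line m n p \<inter> step_seg \<gamma> k \<noteq> {} \<longleftrightarrow>
    (\<exists>q\<in>closed_segment (rpt (x,y+1)) (rpt (x,y)). real n * fst q + (- real m) * snd q = real n * fst p - real m * snd p)"
    unfolding par_hit step_seg_def p0 assms(3) closed_segment_commute[of "rpt (x,y)"] ..
  also have "\<dots> \<longleftrightarrow> real n * fst (rpt (x,y+1)) + (- real m) * snd (rpt (x,y+1)) \<le> real n * fst p - real m * snd p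
     \<and> real n * fst p - real m * snd p \<le> real n * fst (rpt (x,y)) + (- real m) * snd (rpt (x,y))"
    by (rule hit_le) (simp add: rpt_def algebra_simps)
  finally show ?thesis by (simp add: rpt_def algebra_simps)
qed

lemma rpt_g: "real n * fst (rpt (x,y)) - real m * snd (rpt (x,y)) = real_of_int (int n * x - int m * y)"
  by (simp add: rpt_def)

theorem lemma3p8:
  fixes m n :: nat and \<gamma> :: "step list" and i j :: nat and a b a' b' :: int
  assumes "0 < m" and "0 < n" and "coprime m n"
    and "\<gamma> \<in> D m n"
    and "(i, j) \<in> O_set \<gamma>"
    and "pt \<gamma> (Suc i) = (a, b)"
    and "pt \<gamma> j = (a', b')"
  shows "(par_line m n (rpt (a - 1, b)) \<inter> step_seg \<gamma> j \<noteq> {} \<longleftrightarrow>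
            - int n < int n * (a' - a) - int m * (b' - b) \<and>
            int n * (a' - a) - int m * (b' - b) < int m - int n)
       \<and> (par_line m n (rpt (a', b' + 1)) \<inter> step_seg \<gamma> i \<noteq> {} \<longleftrightarrow>
            int m - int n < int n * (a' - a) - int m * (b' - b) \<and>
            int n * (a' - a) - int m * (b' - b) < int m)
       \<and> \<not> (par_line m n (rpt (a - 1, b)) \<inter> step_seg \<gamma> j \<noteq> {} \<and>
             par_line m n (rpt (a', b' + 1)) \<inter> step_seg \<gamma> i \<noteq> {})
       \<and> ((i, j) \<in> H_set m n \<gamma> \<longleftrightarrow>
            par_line m n (rpt (a - 1, b)) \<inter> step_seg \<gamma> j \<noteq> {} \<or>
            par_line m n (rpt (a', b' + 1)) \<inter> step_seg \<gamma> i \<noteq> {})"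
proof -
  from assms(5) have ij: "i < j" "j < length \<gamma>" "\<gamma>!i = H" "\<gamma>!j = V" by (auto simp: O_set_def)
  have il: "i < length \<gamma>" using ij by simp
  from assms(4) have dy: "length (filter (\<lambda>s. s = H) \<gamma>) = m" "length (filter (\<lambda>s. s = V) \<gamma>) = n"
    "\<And>k. k \<le> length \<gamma> \<Longrightarrow> int n * fst (pt \<gamma> k) \<le> int m * snd (pt \<gamma> k)"
    by (auto simp: D_def dyck_path_def)
  have ptL: "pt \<gamma> (length \<gamma>) = (int m, int n)" using dy by (simp add: pt_def)
  have pt0: "pt \<gamma> 0 = (0,0)" by (simp add: pt_def)
  have pi: "pt \<gamma> i = (a-1, b)" using pt_Suc[OF il] ij assms(6) by (auto split: if_splits)
  have pj: "pt \<gamma> (Suc j) = (a', b'+1)" using pt_Suc[OF ij(2)] ij assms(7) by auto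
  have f1: "a - 1 \<ge> 0" "b \<ge> 0" using pt_mono[of 0 i \<gamma>] pi pt0 by auto
  have f2: "a \<le> a'" "b \<le> b'" using pt_mono[of "Suc i" j \<gamma>] assms(6,7) ij by auto
  have f3: "a' \<le> int m" "b' + 1 \<le> int n" using pt_mono[of "Suc j" "length \<gamma>" \<gamma>] pj ptL ij by auto
  have f4: "int n * a \<le> int m * b" using dy(3)[of "Suc i"] il assms(6) by auto
  have cop: "coprime (int m) (int n)" using assms(3) by (simp add: coprime_int_iff)
  define d where "d = int n * (a' - a) - int m * (b' - b)"
  have ne1: "d \<noteq> - int n"
  proof
    assume "d = - int n"
    hence e: "int n * (a' - a + 1) = int m * (b' - b)" by (simp add: d_def algebra_simps)
    hence "int m dvd int n * (a' - a + 1)" by (metis dvd_triv_left)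
    hence "int m dvd (a' - a + 1)" using cop by (simp add: coprime_dvd_mult_right_iff)
    moreover have "0 < a' - a + 1" using f2 by simp
    ultimately have "int m \<le> a' - a + 1" by (simp add: zdvd_imp_le)
    hence "a' - a + 1 = int m" using f1 f3 by simp
    hence "int n * int m = int m * (b' - b)" using e by simp
    hence "b' - b = int n" using assms(1) by (simp add: mult.commute)
    thus False using f1 f3 by simp
  qed
  have ne2: "d \<noteq> int m - int n"
  proof
    assume "d = int m - int n"
    hence e: "int n * (a' - a + 1) = int m * (b' - b + 1)" by (simp add: d_def algebra_simps)
    hence "int m dvd int n * (a' - a + 1)" by (metis dvd_triv_left)
    hence "int m dvd (a' - a + 1)" using cop by (simp add: coprime_dvd_mult_right_iff)
    moreover have "0 < a' - a + 1" using f2 by simp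
    ultimately have "int m \<le> a' - a + 1" by (simp add: zdvd_imp_le)
    hence "a' - a + 1 = int m" "a = 1" using f1 f3 f2 by simp_all
    hence "int n * int m = int m * (b' - b + 1)" using e by simp
    hence "b' - b + 1 = int n" using assms(1) by (simp add: mult.commute)
    moreover have "b > 0"
    proof (rule ccontr)
      assume "\<not> b > 0"
      hence "b = 0" using f1 by simp
      thus False using f4 \<open>a = 1\<close> assms(2) by simp
    qed
    ultimately show False using f3 by simp
  qed
  have ne3: "d \<noteq> int m"
  proof
    assume "d = int m"
    hence e: "int n * (a' - a) = int m * (b' - b + 1)" by (simp add: d_def algebra_simps)
    hence "int m dvd int n * (a' - a)" by (metis dvd_triv_left)
    hence "int m dvd (a' - a)" using cop by (simp add: coprime_dvd_mult_right_iff)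
    moreover have "0 < a' - a"
    proof -
      have "0 < int m * (b' - b + 1)" using assms(1) f2 by simp
      hence "0 < int n * (a' - a)" using e by simp
      thus ?thesis using assms(2) by (simp add: zero_less_mult_iff)
    qed
    ultimately have "int m \<le> a' - a" by (simp add: zdvd_imp_le)
    thus False using f1 f3 by simp
  qed
  have C1: "par_line m n (rpt (a - 1, b)) \<inter> step_seg \<gamma> j \<noteq> {} \<longleftrightarrow> - int n \<le> d \<and> d \<le> int m - int n"
    unfolding segV[OF ij(2,4) assms(7)] rpt_g of_int_le_iff d_def by (auto simp: algebra_simps)
  have C2: "par_line m n (rpt (a', b' + 1)) \<inter> step_seg \<gamma> i \<noteq> {} \<longleftrightarrow> int m - int n \<le> d \<and> d \<le> int m"
    unfolding segH[OF il ij(3) assms(6)] rpt_g of_int_le_iff d_def by (auto simp: algebra_simps)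
  have C3: "(i, j) \<in> H_set m n \<gamma> \<longleftrightarrow> - int n \<le> d \<and> d \<le> int m"
  proof
    assume "(i, j) \<in> H_set m n \<gamma>"
    then obtain p where p: "par_line m n p \<inter> step_seg \<gamma> i \<noteq> {}" "par_line m n p \<inter> step_seg \<gamma> j \<noteq> {}"
      by (auto simp: H_set_def)
    have "real_of_int (int n*(a-1) - int m*b) \<le> real_of_int (int n * a' - int m*b')"
      "real_of_int (int n*a' - int m*(b'+1)) \<le> real_of_int (int n * a - int m*b)"
      using p unfolding segH[OF il ij(3) assms(6)] segV[OF ij(2,4) assms(7)] by linarith+
    thus "- int n \<le> d \<and> d \<le> int m" unfolding of_int_le_iff d_def by (auto simp: algebra_simps)
  next
    assume dd: "- int n \<le> d \<and> d \<le> int m"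
    show "(i, j) \<in> H_set m n \<gamma>"
    proof (cases "d \<le> int m - int n")
      case True
      have "par_line m n (rpt (a - 1, b)) \<inter> step_seg \<gamma> i \<noteq> {}"
        unfolding segH[OF il ij(3) assms(6)] rpt_g by (simp add: algebra_simps)
      thus ?thesis using C1 True dd assms(5) unfolding H_set_def by blast
    next
      case False
      have "par_line m n (rpt (a', b' + 1)) \<inter> step_seg \<gamma> j \<noteq> {}"
        unfolding segV[OF ij(2,4) assms(7)] rpt_g by (simp add: algebra_simps)
      moreover have "par_line m n (rpt (a', b' + 1)) \<inter> step_seg \<gamma> i \<noteq> {}"
        using C2 False dd by simp
      ultimately show ?thesis using assms(5) unfolding H_set_def by blast
    qed
  qed
  show ?thesis unfolding C1 C2 C3 d_def[symmetric] using ne1 ne2 ne3 by auto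
qed

end
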